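(* Let $G,H$ be groups and suppose that $\mathrm{Hom}(H,G)$ contains a homomorphism with infinite image. Let $\mathcal{T}=\phi^*\circ\tau$ with $\phi\in\mathrm{Hom}(H,G)$ and $\tau\in\mathrm{CA}(A^G)$. Then $\mathcal{T}$ is constant if and only if $\mathcal{T}=\psi^*\circ\tau$ for every $\psi\in\mathrm{Hom}(H,G)$.
   Context: $A$ is a finite set with $|A|\ge 2$. $A^G$ is the set of functions $G\to A$ with shift action $(g\cdot x)(k):=x(g^{-1}k)$. $\mathrm{CA}(A^G)$ is the set of maps $\tau:A^G\to A^G$ for which there exist finite $T\subseteq G$ and $\mu:A^T\to A$ with $\tau(x)(g)=\mu((g^{-1}\cdot x)|_T)$ for all $x,g$. For $\phi\in\mathrm{Hom}(H,G)$, $\phi^*:A^G\to A^H$ is $\phi^*(x):=x\circ\phi$. *)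

theory Defs
  imports Main "HOL-Library.FuncSet"
begin

text \<open>Groups are modelled as types of class group_add (written additively, not
necessarily commutative). Configurations A^G are functions 'g => 'a.\<close>

definition shift :: "'g::group_add \<Rightarrow> ('g \<Rightarrow> 'a) \<Rightarrow> ('g \<Rightarrow> 'a)" where
  "shift g x = (\<lambda>k. x (- g + k))"

text \<open>Cellular automata: tau x g = mu ((g^-1 . x) restricted to T), T finite;
A^T is represented by functions extensional on T (restrict).\<close>
definition CA :: "(('g::group_add \<Rightarrow> 'a) \<Rightarrow> ('g \<Rightarrow> 'a)) set" where
  "CA = {\<tau>. \<exists>(T::'g set) (\<mu>::('g \<Rightarrow> 'a) \<Rightarrow> 'a). finite T \<and>
            (\<forall>x g. \<tau> x g = \<mu> (restrict (shift (- g) x) T))}"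

definition grp_hom :: "('h::group_add \<Rightarrow> 'g::group_add) set" where
  "grp_hom = {\<phi>. \<forall>a b. \<phi> (a + b) = \<phi> a + \<phi> b}"

definition pullback :: "('h \<Rightarrow> 'g) \<Rightarrow> ('g \<Rightarrow> 'a) \<Rightarrow> ('h \<Rightarrow> 'a)" where
  "pullback \<phi> x = x \<circ> \<phi>"

end

theory Submission
  imports Defs
begin

lemma shift_inv: "shift (- g) (shift g y) = (y :: 'g::group_add \<Rightarrow> 'a)"
  by (simp add: shift_def add.assoc[symmetric])

theorem lemma3p8:
  fixes \<phi> :: "'h::group_add \<Rightarrow> 'g::group_add"
    and \<tau> :: "('g \<Rightarrow> 'a::finite) \<Rightarrow> ('g \<Rightarrow> 'a)"
  assumes "card (UNIV :: 'a set) \<ge> 2"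
    and "\<exists>\<phi>0 \<in> (grp_hom :: ('h \<Rightarrow> 'g) set). infinite (range \<phi>0)"
    and "\<phi> \<in> grp_hom"
    and "\<tau> \<in> CA"
  shows "(\<exists>c. \<forall>x. (pullback \<phi> \<circ> \<tau>) x = c) \<longleftrightarrow>
         (\<forall>\<psi> \<in> grp_hom. pullback \<phi> \<circ> \<tau> = pullback \<psi> \<circ> \<tau>)"
proof -
  obtain T \<mu> where fT: "finite (T::'g set)" and tau: "\<And>x g. \<tau> x g = \<mu> (restrict (shift (- g) x) T)"
    using assms(4) unfolding CA_def by blast
  show ?thesis
  proof
    assume "\<exists>c. \<forall>x. (pullback \<phi> \<circ> \<tau>) x = c"
    then obtain c where c: "\<And>x. pullback \<phi> (\<tau> x) = c" by auto
    have M: "\<mu> (restrict y T) = c 0" for y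
    proof -
      have "pullback \<phi> (\<tau> (shift (\<phi> 0) y)) 0 = c 0" using c by simp
      thus ?thesis by (simp add: pullback_def tau shift_inv)
    qed
    show "\<forall>\<psi> \<in> grp_hom. pullback \<phi> \<circ> \<tau> = pullback \<psi> \<circ> \<tau>"
      by (auto simp: fun_eq_iff pullback_def tau M)
  next
    assume H: "\<forall>\<psi> \<in> grp_hom. pullback \<phi> \<circ> \<tau> = pullback \<psi> \<circ> \<tau>"
    obtain \<phi>0 :: "'h \<Rightarrow> 'g" where h0: "\<phi>0 \<in> grp_hom" and inf: "infinite (range \<phi>0)"
      using assms(2) by blast
    have z0: "(\<lambda>_::'h. 0::'g) \<in> grp_hom" by (simp add: grp_hom_def)
    have eq: "pullback \<phi>0 (\<tau> x) = pullback (\<lambda>_::'h. 0::'g) (\<tau> x)" for x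
      using H h0 z0 by (metis (no_types) comp_apply)
    have const: "\<tau> x (\<phi>0 h) = \<tau> x 0" for x h
      using fun_cong[OF eq[of x], of h] by (simp add: pullback_def)
    let ?D = "(\<lambda>(t,k). t + - k) ` (T \<times> T)"
    have "finite ?D" using fT by simp
    then obtain g where gr: "g \<in> range \<phi>0" and gD: "g \<notin> ?D"
    proof -
      have "infinite (range \<phi>0 - ?D)" using inf \<open>finite ?D\<close> by (rule Diff_infinite_finite[rotated])
      hence "range \<phi>0 - ?D \<noteq> {}" by (metis finite.emptyI)
      thus ?thesis using that by blast
    qed
    have M: "\<mu> (restrict x T) = \<mu> (restrict y T)" for x y
    proof -
      define z where "z = (\<lambda>k. if k \<in> T then x k else y (- g + k))"
      have nT: "g + k \<notin> T" if "k \<in> T" for k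
      proof
        assume "g + k \<in> T"
        hence "(g + k) + - k \<in> ?D" using that by force
        thus False using gD by (simp add: add.assoc)
      qed
      have r1: "restrict (shift (- 0) z) T = restrict x T"
        by (auto simp: restrict_def shift_def z_def fun_eq_iff)
      have r2: "restrict (shift (- g) z) T = restrict y T"
        using nT by (auto simp: restrict_def shift_def z_def fun_eq_iff add.assoc[symmetric])
      obtain h where "g = \<phi>0 h" using gr by auto
      hence "\<tau> z g = \<tau> z 0" using const by simp
      thus ?thesis using r1 r2 tau by metis
    qed
    show "\<exists>c. \<forall>x. (pullback \<phi> \<circ> \<tau>) x = c"
      by (rule exI[of _ "\<lambda>_. \<mu> (restrict undefined T)"])
         (auto simp: fun_eq_iff pullback_def tau intro: M)
  qed
qed

end
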